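(* Fix $\kappa>0$ and $0<L<U<\infty$; let $a=(1+U)^{-1}$, $b=(1+L)^{-1}$, $I=[a,b]$. For $x\in\mathbb Z_+$ and $z\in I$ let $\phi_x(z)=\frac{\Gamma(x+\kappa)}{x!\,\Gamma(\kappa)}z^x(1-z)^\kappa$. For $\theta>0$ and $z\in I$ let $\Phi_\theta(z)=\frac{\theta^{\kappa-1}}{\Gamma(\kappa)}\left(\frac{1-z}{z}\right)^\kappa e^{-\theta(1-z)/z}$, and for a measurable $\psi:[0,\infty)\to\mathbb R$ with $\|\psi\|_\infty\le1$ let $T_\psi(z)=\int_0^\infty\psi(\theta)\Phi_\theta(z)\,d\theta$. Then there exist a constant $C>0$ depending only on $(\kappa,L,U)$ and constants $\rho\in(0,1)$ and $B>1$ depending only on $(L,U)$ such that, for every integer $m\ge2$ and every such $\psi$, there exist coefficients $a^{(m)}_{\psi,0},\dots,a^{(m)}_{\psi,m}\in\mathbb R$ with $$\sup_{z\in I}\Big|T_\psi(z)-\sum_{x=0}^m a^{(m)}_{\psi,x}\phi_x(z)\Big|\le C\rho^m\qquad\text{and}\qquad\sum_{x=0}^m|a^{(m)}_{\psi,x}|\le C(m+1)^{(1-\kappa)_+}B^m.$$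
   Context: $\|\psi\|_\infty$ is the supremum norm; $(t)_+=\max(t,0)$. *)

theory Defs
  imports "HOL-Analysis.Analysis"
begin

definition phiNB :: "real \<Rightarrow> nat \<Rightarrow> real \<Rightarrow> real" where
  "phiNB \<kappa> x z = Gamma (real x + \<kappa>) / (fact x * Gamma \<kappa>) * z ^ x * (1 - z) powr \<kappa>"

definition PhiG :: "real \<Rightarrow> real \<Rightarrow> real \<Rightarrow> real" where
  "PhiG \<kappa> \<theta> z = \<theta> powr (\<kappa> - 1) / Gamma \<kappa> * ((1 - z) / z) powr \<kappa>
                     * exp (- \<theta> * (1 - z) / z)"

definition Tpsi :: "real \<Rightarrow> (real \<Rightarrow> real) \<Rightarrow> real \<Rightarrow> real" where
  "Tpsi \<kappa> \<psi> z = (LINT \<theta>:{0..}|lborel. \<psi> \<theta> * PhiG \<kappa> \<theta> z)"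

end

theory Submission
  imports Defs "HOL-Complex_Analysis.Complex_Analysis"
begin


lemma gamma_integrable:
  assumes "(\<kappa>::real) > 0"
  shows "integrable lborel (\<lambda>t. indicator {0..} t * t powr (\<kappa>-1) / exp t)"
proof (rule integrableI_nonneg)
  show "(\<lambda>t. indicator {0..} t * t powr (\<kappa>-1) / exp t) \<in> borel_measurable lborel" by measurable
  show "AE x in lborel. 0 \<le> indicator {0..} x * x powr (\<kappa>-1) / exp x" by (auto simp: indicator_def)
  show "(\<integral>\<^sup>+ x. ennreal (indicator {0..} x * x powr (\<kappa>-1) / exp x) \<partial>lborel) < \<infinity>"
  proof -
    have "(\<integral>\<^sup>+ x. ennreal (indicator {0..} x * x powr (\<kappa>-1) / exp x) \<partial>lborel) = ennreal (Gamma \<kappa>)"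
      using Gamma_conv_nn_integral_real[OF assms] by simp
    then show ?thesis by simp
  qed
qed

lemma gamma_integrable_scaled:
  assumes "(\<kappa>::real) > 0" "\<delta> > 0"
  shows "integrable lborel (\<lambda>\<theta>. indicator {0..} \<theta> * \<theta> powr (\<kappa>-1) * exp (-\<delta>*\<theta>))"
proof -
  have "integrable lborel (\<lambda>x. indicator {0..} (0 + \<delta>*x) * (0 + \<delta>*x) powr (\<kappa>-1) / exp (0 + \<delta>*x))"
    using lborel_integrable_real_affine_iff[of \<delta> "\<lambda>t. indicator {0..} t * t powr (\<kappa>-1) / exp t" 0]
      gamma_integrable[OF assms(1)] assms(2) by simp
  then have "integrable lborel (\<lambda>x. \<delta> powr (1-\<kappa>) * (indicator {0..} (0 + \<delta>*x) * (0 + \<delta>*x) powr (\<kappa>-1) / exp (0 + \<delta>*x)))"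
    by (rule integrable_mult_right)
  moreover have "(\<lambda>x. \<delta> powr (1-\<kappa>) * (indicator {0..} (0 + \<delta>*x) * (0 + \<delta>*x) powr (\<kappa>-1) / exp (0 + \<delta>*x)))
       = (\<lambda>x. indicator {0..} x * x powr (\<kappa>-1) * exp (-\<delta>*x))"
  proof
    fix x :: real
    show "\<delta> powr (1-\<kappa>) * (indicator {0..} (0 + \<delta>*x) * (0 + \<delta>*x) powr (\<kappa>-1) / exp (0 + \<delta>*x))
       = indicator {0..} x * x powr (\<kappa>-1) * exp (-\<delta>*x)"
    proof (cases "x \<ge> 0")
      case True
      have e: "\<delta> powr (1-\<kappa>) * (\<delta>*x) powr (\<kappa>-1) = x powr (\<kappa>-1)"
        using True assms by (simp add: powr_mult powr_add[symmetric])
      have "\<delta> powr (1-\<kappa>) * (indicator {0..} (0 + \<delta>*x) * (0 + \<delta>*x) powr (\<kappa>-1) / exp (0 + \<delta>*x))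
          = (\<delta> powr (1-\<kappa>) * (\<delta>*x) powr (\<kappa>-1)) / exp (\<delta>*x)"
        using True assms by (simp add: indicator_def)
      also have "\<dots> = x powr (\<kappa>-1) * exp (-\<delta>*x)"
        unfolding e by (simp add: exp_minus divide_inverse)
      finally show ?thesis using True by (simp add: indicator_def)
    next
      case False
      then show ?thesis using assms mult_pos_neg[of \<delta> x] by (simp add: indicator_def)
    qed
  qed
  ultimately show ?thesis by (rule back_subst)
qed



definition hf :: "real \<Rightarrow> real \<Rightarrow> complex \<Rightarrow> complex" where
  "hf \<kappa> \<theta> w = w powr (- of_real \<kappa>) * exp (- of_real \<theta> * (1 - w) / w)"

lemma ball_Re_pos: "w \<in> ball (1/2) (1/2) \<Longrightarrow> Re w > 0"
proof -
  assume "w \<in> ball (1/2) (1/2)"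
  then have "cmod (1/2 - w) < 1/2" by (simp add: dist_norm)
  moreover have "\<bar>Re (1/2 - w)\<bar> \<le> cmod (1/2 - w)" by (rule abs_Re_le_cmod)
  ultimately show "Re w > 0" by simp
qed

lemma hf_holo: "hf \<kappa> \<theta> holomorphic_on ball (1/2) (1/2)"
proof -
  have nz: "w \<noteq> 0" if "w \<in> ball (1/2) (1/2)" for w :: complex using ball_Re_pos[OF that] by auto
  have "(\<lambda>w. w powr (- of_real \<kappa>)) holomorphic_on ball (1/2) (1/2)"
  proof (rule holomorphic_on_powr)
    show "(\<lambda>x. x) holomorphic_on ball (1/2) (1/2)" by (rule holomorphic_on_ident)
    show "(\<lambda>x. - complex_of_real \<kappa>) holomorphic_on ball (1 / 2) (1 / 2)" by (rule holomorphic_on_const)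
    fix x :: complex assume "x \<in> ball (1/2) (1/2)"
    then have "Re x > 0" by (rule ball_Re_pos)
    then show "x \<notin> \<real>\<^sub>\<le>\<^sub>0" by (auto simp: complex_nonpos_Reals_iff)
  qed
  moreover have "(\<lambda>w. exp (- of_real \<theta> * (1 - w) / w)) holomorphic_on ball (1/2) (1/2)"
    using nz by (intro holomorphic_intros) auto
  ultimately show ?thesis unfolding hf_def[abs_def] by (rule holomorphic_on_mult)
qed

lemma hf_bound:
  assumes "\<theta> \<ge> 0" "0 < R" "R < 1/2" "cmod (w - 1/2) \<le> R" "\<kappa> > 0"
  shows "cmod (hf \<kappa> \<theta> w) \<le> (1/2 - R) powr (-\<kappa>) * exp (- (1/(1/2+R) - 1) * \<theta>)"
proof -
  define x where "x = Re w"
  define y where "y = Im w"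
  have wxy: "w = Complex x y" by (simp add: x_def y_def)
  have "(cmod (w - 1/2))^2 \<le> R^2" using assms(4) by (intro power_mono) auto
  then have c1: "(x - 1/2)^2 + y^2 \<le> R^2" unfolding cmod_power2 x_def y_def by simp
  have sq: "(x - 1/2)^2 \<le> R^2" using c1 by (smt (verit) zero_le_power2)
  have xle: "x - 1/2 \<le> R" using power2_le_imp_le[OF sq] assms(2) by simp
  have sq2: "(1/2 - x)^2 \<le> R^2" using sq by (simp add: power2_commute)
  have xpos: "1/2 - x \<le> R" using power2_le_imp_le[OF sq2] assms(2) by simp
  have nw: "cmod w \<ge> 1/2 - R"
  proof -
    have "cmod (1/2) - cmod (w - 1/2) \<le> cmod w" by (metis norm_diff_ineq add.commute diff_add_cancel norm_minus_commute)
    then show ?thesis using assms(4) by simp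
  qed
  have w0: "w \<noteq> 0" using nw assms by auto
  have p1: "cmod (w powr (- of_real \<kappa>)) = cmod w powr (-\<kappa>)"
    by (simp add: norm_powr_real_powr')
  have p2: "cmod w powr (-\<kappa>) \<le> (1/2 - R) powr (-\<kappa>)"
    using nw assms by (intro powr_mono2') auto
  have re: "Re (1/w) \<ge> 1/(1/2+R)"
  proof -
    have n2: "(cmod w)^2 = x^2 + y^2" unfolding cmod_power2 x_def y_def by simp
    have r1: "Re (1/w) = x / (x^2+y^2)" unfolding wxy by (simp add: Re_divide power2_eq_square)
    have s1: "x^2 + y^2 \<le> R^2 - 1/4 + x" using c1 by (simp add: power2_eq_square algebra_simps)
    have s2: "(R^2 - 1/4 + x) - x*(1/2+R) = (R - 1/2)*(R + 1/2 - x)" by (simp add: power2_eq_square algebra_simps)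
    have s3: "(R - 1/2)*(R + 1/2 - x) \<le> 0" using assms(3) xle by (intro mult_nonpos_nonneg) auto
    have s4: "x^2 + y^2 \<le> x * (1/2 + R)" using s1 s2 s3 by linarith
    have s5: "x^2 + y^2 > 0" using w0 n2 by (metis zero_less_norm_iff zero_less_power)
    have "1/(1/2+R) \<le> x / (x^2+y^2)" using s4 s5 assms(2)
      by (simp add: divide_simps)
    then show ?thesis using r1 by simp
  qed
  have e: "cmod (exp (- of_real \<theta> * (1 - w) / w)) = exp (- \<theta> * (Re (1/w) - 1))"
  proof -
    have "- of_real \<theta> * (1 - w) / w = - of_real \<theta> * (1/w - 1)" using w0 by (simp add: field_simps)
    then show ?thesis by (simp add: norm_exp_eq_Re)
  qed
  have e2: "exp (- \<theta> * (Re (1/w) - 1)) \<le> exp (- (1/(1/2+R) - 1) * \<theta>)"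
  proof -
    have "\<theta> * (1/(1/2+R)) \<le> \<theta> * Re (1/w)" using re assms(1) by (rule mult_left_mono)
    then have "- \<theta> * (Re (1/w) - 1) \<le> - (1/(1/2+R) - 1) * \<theta>" by (simp add: algebra_simps)
    then show ?thesis by simp
  qed
  show ?thesis unfolding hf_def norm_mult p1 e
    by (intro mult_mono p2 e2) auto
qed



lemma hf_cauchy:
  assumes "\<theta> \<ge> 0" "0 < R" "R < 1/2" "\<kappa> > 0"
  shows "cmod ((deriv ^^ k) (hf \<kappa> \<theta>) (1/2)) \<le> fact k * ((1/2 - R) powr (-\<kappa>) * exp (- (1/(1/2+R) - 1) * \<theta>)) / R^k"
proof (rule Cauchy_inequality)
  have sub: "cball (1/2::complex) R \<subseteq> ball (1/2) (1/2)" using assms by auto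
  show "hf \<kappa> \<theta> holomorphic_on ball (1/2) R"
    by (rule holomorphic_on_subset[OF hf_holo]) (use sub in auto)
  show "continuous_on (cball (1/2) R) (hf \<kappa> \<theta>)"
    by (rule holomorphic_on_imp_continuous_on, rule holomorphic_on_subset[OF hf_holo sub])
  show "0 < R" by fact
  fix x :: complex assume "cmod (1/2 - x) = R"
  then have "cmod (x - 1/2) \<le> R" by (simp add: norm_minus_commute)
  then show "cmod (hf \<kappa> \<theta> x) \<le> (1/2 - R) powr (-\<kappa>) * exp (- (1/(1/2+R) - 1) * \<theta>)"
    using hf_bound assms by blast
qed

lemma hf_taylor:
  assumes "\<theta> \<ge> 0" "0 < r" "r < R" "R < 1/2" "\<kappa> > 0" "cmod (z - 1/2) \<le> r"
  shows "cmod (hf \<kappa> \<theta> z - (\<Sum>k\<le>m. (deriv ^^ k) (hf \<kappa> \<theta>) (1/2) / fact k * (z - 1/2)^k))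
     \<le> ((1/2 - R) powr (-\<kappa>) * exp (- (1/(1/2+R) - 1) * \<theta>)) * (r/R)^(m+1) / (1 - r/R)"
proof -
  define M where "M = (1/2 - R) powr (-\<kappa>) * exp (- (1/(1/2+R) - 1) * \<theta>)"
  define f where "f = (\<lambda>k. (deriv ^^ k) (hf \<kappa> \<theta>) (1/2) / fact k * (z - 1/2)^k)"
  have M0: "M \<ge> 0" unfolding M_def by simp
  have zin: "z \<in> ball (1/2) (1/2)" using assms by (simp add: dist_norm norm_minus_commute)
  have s: "f sums hf \<kappa> \<theta> z" unfolding f_def by (rule holomorphic_power_series[OF hf_holo zin])
  have s2: "(\<lambda>i. f (i + Suc m)) sums (hf \<kappa> \<theta> z - (\<Sum>i<Suc m. f i))"
    by (rule sums_split_initial_segment[OF s])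
  have fb: "cmod (f k) \<le> M * (r/R)^k" for k
  proof -
    have "cmod (f k) = cmod ((deriv ^^ k) (hf \<kappa> \<theta>) (1/2)) / fact k * cmod (z - 1/2)^k"
      unfolding f_def by (simp add: norm_mult norm_divide norm_power)
    also have "\<dots> \<le> (fact k * M / R^k) / fact k * r^k"
      using hf_cauchy[of \<theta> R \<kappa> k] assms M0 unfolding M_def[symmetric]
      by (intro mult_mono divide_right_mono power_mono) auto
    also have "\<dots> = M * (r/R)^k" by (simp add: power_divide)
    finally show ?thesis .
  qed
  have q: "0 \<le> r/R" "r/R < 1" using assms by auto
  have geo: "(\<lambda>i. M * (r/R)^(Suc m) * (r/R)^i) sums (M * (r/R)^(Suc m) * (1 / (1 - r/R)))"
    by (rule sums_mult[OF geometric_sums]) (use q in auto)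
  have "cmod (hf \<kappa> \<theta> z - (\<Sum>i<Suc m. f i)) = cmod (\<Sum>i. f (i + Suc m))"
    using s2 by (simp add: sums_iff)
  also have "\<dots> \<le> (\<Sum>i. M * (r/R)^(Suc m) * (r/R)^i)"
  proof (rule norm_suminf_le)
    show "summable (\<lambda>i. M * (r/R)^(Suc m) * (r/R)^i)" using geo by (rule sums_summable)
    fix i show "cmod (f (i + Suc m)) \<le> M * (r/R)^(Suc m) * (r/R)^i"
      using fb[of "i + Suc m"] by (simp add: power_add mult_ac)
  qed
  also have "\<dots> = M * (r/R)^(m+1) / (1 - r/R)" using geo by (simp add: sums_iff)
  finally show ?thesis unfolding f_def M_def by (simp add: lessThan_Suc_atMost)
qed



lemma hf_meas0: "(\<lambda>\<theta>. hf \<kappa> \<theta> z) \<in> borel_measurable lborel"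
  unfolding hf_def by measurable

lemma aux_lin: "(W::real) \<le> D + (1/2 - D)/2 \<Longrightarrow> D < 1/2 \<Longrightarrow> W < 1/2" by argo

lemma hf_meas:
  "z \<in> ball (1/2) (1/2) \<Longrightarrow> (\<lambda>\<theta>. (deriv ^^ k) (hf \<kappa> \<theta>) z) \<in> borel_measurable lborel"
proof (induction k arbitrary: z)
  case 0
  then show ?case using hf_meas0 by simp
next
  case (Suc k)
  define e where "e = (1/2 - dist (1/2) z) / 2"
  have e0: "e > 0" using Suc.prems by (simp add: e_def)
  define t where "t = (\<lambda>n::nat. e / (real n + 1))"
  have t0: "t n > 0" for n unfolding t_def using e0 by simp
  define s where "s = (\<lambda>n::nat. z + of_real (t n))"
  have sin: "s n \<in> ball (1/2) (1/2)" for n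
  proof -
    have d1: "dist (1/2) (s n) \<le> dist (1/2) z + dist z (s n)" by (rule dist_triangle)
    have d2: "dist z (s n) = t n" unfolding s_def using t0[of n] by (simp add: dist_norm)
    have d3: "t n \<le> e" using e0 unfolding t_def by (simp add: divide_le_eq)
    have "dist (1/2) (s n) \<le> dist (1/2) z + e" using d1 d2 d3 by linarith
    moreover have "dist (1/2) z < 1/2" using Suc.prems by simp
    ultimately have "dist (1/2) (s n) < 1/2" unfolding e_def by (rule aux_lin)
    then show ?thesis by simp
  qed
  have sne: "s n \<noteq> z" for n unfolding s_def using t0[of n] by simp
  have slim: "s \<longlonglongrightarrow> z"
  proof -
    have "t \<longlonglongrightarrow> 0" unfolding t_def
    proof (intro tendsto_divide_0[OF tendsto_const])
      have "LIM n sequentially. 1 + real n :> at_top"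
        by (rule filterlim_tendsto_add_at_top[OF tendsto_const filterlim_real_sequentially])
      then show "LIM n sequentially. real n + 1 :> at_infinity"
        using filterlim_at_top_imp_at_infinity by (simp add: add.commute)
    qed
    then have "(\<lambda>n. z + of_real (t n)) \<longlonglongrightarrow> z + of_real 0"
      by (intro tendsto_intros)
    then show ?thesis unfolding s_def by simp
  qed
  have sat: "filterlim s (at z) sequentially"
    using slim sne by (intro filterlim_atI) auto
  define q where "q = (\<lambda>n \<theta>. ((deriv ^^ k) (hf \<kappa> \<theta>) (s n) - (deriv ^^ k) (hf \<kappa> \<theta>) z) / (s n - z))"
  show ?case
  proof (rule borel_measurable_LIMSEQ_metric)
    fix i
    show "q i \<in> borel_measurable lborel" unfolding q_def
      using Suc.IH[OF sin] Suc.IH[OF Suc.prems] by measurable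
  next
    fix \<theta> :: real
    have hol: "(deriv ^^ k) (hf \<kappa> \<theta>) holomorphic_on ball (1/2) (1/2)"
      by (rule holomorphic_higher_deriv[OF hf_holo]) simp
    have "((deriv ^^ k) (hf \<kappa> \<theta>) has_field_derivative deriv ((deriv ^^ k) (hf \<kappa> \<theta>)) z) (at z)"
      by (rule holomorphic_derivI[OF hol _ Suc.prems]) simp
    then have "((\<lambda>y. ((deriv ^^ k) (hf \<kappa> \<theta>) y - (deriv ^^ k) (hf \<kappa> \<theta>) z) / (y - z))
        \<longlongrightarrow> deriv ((deriv ^^ k) (hf \<kappa> \<theta>)) z) (at z)"
      by (simp add: has_field_derivative_iff)
    from filterlim_compose[OF this sat]
    show "(\<lambda>i. q i \<theta>) \<longlonglongrightarrow> (deriv ^^ Suc k) (hf \<kappa> \<theta>) z"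
      unfolding q_def by simp
  qed
qed



definition ak :: "real \<Rightarrow> nat \<Rightarrow> real \<Rightarrow> real" where
  "ak \<kappa> k \<theta> = Re ((deriv ^^ k) (hf \<kappa> \<theta>) (1/2)) / fact k"

definition hr :: "real \<Rightarrow> real \<Rightarrow> real \<Rightarrow> real" where
  "hr \<kappa> \<theta> z = z powr (-\<kappa>) * exp (-\<theta>*(1-z)/z)"

lemma Re_aux: "Re (c / fact k * complex_of_real y) = Re c / fact k * y"
proof -
  have "(fact k :: complex) = of_real (fact k)" by simp
  then have "c / fact k * complex_of_real y = c * of_real (y / fact k)" by (simp add: divide_inverse mult_ac)
  then have "Re (c / fact k * complex_of_real y) = Re c * (y / fact k)"
    by (simp only: times_complex.sel Re_complex_of_real Im_complex_of_real)
  then show ?thesis by simp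
qed

lemma cmod_aux: "cmod (complex_of_real z - 1/2) = \<bar>z - 1/2\<bar>"
proof -
  have "(complex_of_real z - 1/2) = complex_of_real (z - 1/2)" by simp
  then show ?thesis by (metis norm_of_real)
qed

lemma ak_meas: "(\<lambda>\<theta>. ak \<kappa> k \<theta>) \<in> borel_measurable lborel"
proof -
  have "(\<lambda>\<theta>. (deriv ^^ k) (hf \<kappa> \<theta>) (1/2)) \<in> borel_measurable lborel"
    by (rule hf_meas) simp
  then show ?thesis unfolding ak_def by measurable
qed

lemma ak_bound:
  assumes "\<theta> \<ge> 0" "0 < R" "R < 1/2" "\<kappa> > 0"
  shows "\<bar>ak \<kappa> k \<theta>\<bar> \<le> ((1/2 - R) powr (-\<kappa>) * exp (- (1/(1/2+R) - 1) * \<theta>)) / R^k"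
proof -
  have "\<bar>ak \<kappa> k \<theta>\<bar> \<le> cmod ((deriv ^^ k) (hf \<kappa> \<theta>) (1/2)) / fact k"
    unfolding ak_def by (simp add: abs_Re_le_cmod divide_right_mono)
  also have "\<dots> \<le> (fact k * ((1/2 - R) powr (-\<kappa>) * exp (- (1/(1/2+R) - 1) * \<theta>)) / R^k) / fact k"
    by (rule divide_right_mono[OF hf_cauchy[OF assms]]) simp
  also have "\<dots> = ((1/2 - R) powr (-\<kappa>) * exp (- (1/(1/2+R) - 1) * \<theta>)) / R^k" by simp
  finally show ?thesis .
qed

lemma hf_real: "z > 0 \<Longrightarrow> hf \<kappa> \<theta> (of_real z) = of_real (hr \<kappa> \<theta> z)"
  unfolding hf_def hr_def
  by (simp add: powr_of_real[symmetric] exp_of_real[symmetric])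

lemma hr_bound:
  assumes "\<theta> \<ge> 0" "0 < R" "R < 1/2" "\<kappa> > 0" "\<bar>z - 1/2\<bar> \<le> R" "z > 0"
  shows "\<bar>hr \<kappa> \<theta> z\<bar> \<le> (1/2 - R) powr (-\<kappa>) * exp (- (1/(1/2+R) - 1) * \<theta>)"
proof -
  have "cmod (of_real z - 1/2) \<le> R"
    using assms(5) cmod_aux by simp
  from hf_bound[OF assms(1-3) this assms(4)] show ?thesis
    using hf_real[OF assms(6)] by simp
qed

lemma hr_taylor:
  assumes "\<theta> \<ge> 0" "0 < r" "r < R" "R < 1/2" "\<kappa> > 0" "\<bar>z - 1/2\<bar> \<le> r" "z > 0"
  shows "\<bar>hr \<kappa> \<theta> z - (\<Sum>k\<le>m. ak \<kappa> k \<theta> * (z - 1/2)^k)\<bar>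
     \<le> ((1/2 - R) powr (-\<kappa>) * exp (- (1/(1/2+R) - 1) * \<theta>)) * (r/R)^(m+1) / (1 - r/R)"
proof -
  have zc: "cmod (of_real z - 1/2) \<le> r"
    using assms(6) cmod_aux by simp
  define D where "D = hf \<kappa> \<theta> (of_real z) - (\<Sum>k\<le>m. (deriv ^^ k) (hf \<kappa> \<theta>) (1/2) / fact k * (of_real z - 1/2)^k)"
  have "Re D = hr \<kappa> \<theta> z - (\<Sum>k\<le>m. ak \<kappa> k \<theta> * (z - 1/2)^k)"
  proof -
    have e: "(of_real z - 1/2 :: complex)^k = of_real ((z - 1/2)^k)" for k by simp
    show ?thesis unfolding D_def hf_real[OF assms(7)] ak_def e
      by (simp only: Re_sum Re_aux minus_complex.sel Re_complex_of_real)
  qed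
  then have "\<bar>hr \<kappa> \<theta> z - (\<Sum>k\<le>m. ak \<kappa> k \<theta> * (z - 1/2)^k)\<bar> \<le> cmod D"
    by (metis abs_Re_le_cmod)
  also have "cmod D \<le> ((1/2 - R) powr (-\<kappa>) * exp (- (1/(1/2+R) - 1) * \<theta>)) * (r/R)^(m+1) / (1 - r/R)"
    unfolding D_def by (rule hf_taylor[OF assms(1-5) zc])
  finally show ?thesis .
qed



lemma poly_conv:
  fixes w :: real
  shows "\<exists>d. (\<forall>z. (\<Sum>k\<le>m. A k * (z - w)^k) = (\<Sum>x\<le>m. d x * z^x)) \<and>
             (\<Sum>x\<le>m. \<bar>d x\<bar>) \<le> (\<Sum>k\<le>m. \<bar>A k\<bar> * (1 + \<bar>w\<bar>)^k)"
proof (induction m)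
  case 0
  show ?case by (rule exI[of _ A]) simp
next
  case (Suc m)
  then obtain d where d1: "\<And>z. (\<Sum>k\<le>m. A k * (z - w)^k) = (\<Sum>x\<le>m. d x * z^x)"
    and d2: "(\<Sum>x\<le>m. \<bar>d x\<bar>) \<le> (\<Sum>k\<le>m. \<bar>A k\<bar> * (1 + \<bar>w\<bar>)^k)" by blast
  define e where "e = (\<lambda>x. A (Suc m) * (of_nat (Suc m choose x) * (-w)^(Suc m - x)))"
  define d' where "d' = (\<lambda>x. (if x \<le> m then d x else 0) + e x)"
  have s1: "(\<Sum>x\<le>Suc m. (if x \<le> m then d x else 0) * z^x) = (\<Sum>x\<le>m. d x * z^x)" for z :: real
    by (simp add: sum.atMost_Suc)
  have s1': "(\<Sum>x\<le>Suc m. \<bar>if x \<le> m then d x else 0\<bar>) = (\<Sum>x\<le>m. \<bar>d x\<bar>)"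
    by (simp add: sum.atMost_Suc)
  have s2: "(\<Sum>x\<le>Suc m. e x * z^x) = A (Suc m) * (z - w)^(Suc m)" for z :: real
  proof -
    have b: "(z + (-w))^(Suc m) = (\<Sum>x\<le>Suc m. of_nat (Suc m choose x) * z^x * (-w)^(Suc m - x))"
      by (rule binomial_ring)
    have "(\<Sum>x\<le>Suc m. e x * z^x) = A (Suc m) * (\<Sum>x\<le>Suc m. of_nat (Suc m choose x) * z^x * (-w)^(Suc m - x))"
      unfolding e_def sum_distrib_left by (intro sum.cong) (simp_all add: mult_ac)
    also have "\<dots> = A (Suc m) * (z - w)^(Suc m)" unfolding b[symmetric] by (simp only: diff_conv_add_uminus)
    finally show ?thesis .
  qed
  have s3: "(\<Sum>x\<le>Suc m. \<bar>e x\<bar>) = \<bar>A (Suc m)\<bar> * (1 + \<bar>w\<bar>)^(Suc m)"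
  proof -
    have b: "(1 + \<bar>w\<bar>)^(Suc m) = (\<Sum>x\<le>Suc m. of_nat (Suc m choose x) * 1^x * \<bar>w\<bar>^(Suc m - x))"
      by (rule binomial_ring)
    have "(\<Sum>x\<le>Suc m. \<bar>e x\<bar>) = \<bar>A (Suc m)\<bar> * (\<Sum>x\<le>Suc m. of_nat (Suc m choose x) * 1^x * \<bar>w\<bar>^(Suc m - x))"
      unfolding e_def sum_distrib_left by (intro sum.cong) (simp_all add: abs_mult power_abs)
    then show ?thesis unfolding b[symmetric] .
  qed
  show ?case
  proof (intro exI[of _ d'] conjI allI)
    fix z :: real
    show "(\<Sum>k\<le>Suc m. A k * (z - w)^k) = (\<Sum>x\<le>Suc m. d' x * z^x)"
      unfolding d'_def distrib_right sum.distrib s1 s2 by (simp add: d1)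
  next
    have "(\<Sum>x\<le>Suc m. \<bar>d' x\<bar>) \<le> (\<Sum>x\<le>Suc m. \<bar>if x \<le> m then d x else 0\<bar> + \<bar>e x\<bar>)"
      unfolding d'_def by (intro sum_mono abs_triangle_ineq)
    also have "\<dots> = (\<Sum>x\<le>m. \<bar>d x\<bar>) + \<bar>A (Suc m)\<bar> * (1 + \<bar>w\<bar>)^(Suc m)"
      unfolding sum.distrib s1' s3 ..
    also have "\<dots> \<le> (\<Sum>k\<le>Suc m. \<bar>A k\<bar> * (1 + \<bar>w\<bar>)^k)"
      using d2 by simp
    finally show "(\<Sum>x\<le>Suc m. \<bar>d' x\<bar>) \<le> (\<Sum>k\<le>Suc m. \<bar>A k\<bar> * (1 + \<bar>w\<bar>)^k)" .
  qed
qed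

lemma gamma_ratio:
  assumes "\<kappa> > 0"
  shows "0 < fact x * Gamma \<kappa> / Gamma (real x + \<kappa>) \<and> fact x * Gamma \<kappa> / Gamma (real x + \<kappa>) \<le> 2^x / min \<kappa> 1"
proof (induction x)
  case 0
  have gp: "Gamma \<kappa> > 0" using assms by (rule Gamma_real_pos)
  then have "fact 0 * Gamma \<kappa> / Gamma (real 0 + \<kappa>) = 1" by simp
  moreover have "(1::real) \<le> 2^0 / min \<kappa> 1" using assms by (simp add: min_def field_simps)
  ultimately show ?case by simp
next
  case (Suc x)
  have gp: "Gamma (real x + \<kappa>) > 0" using assms by (intro Gamma_real_pos) simp
  have g: "Gamma (real (Suc x) + \<kappa>) = (real x + \<kappa>) * Gamma (real x + \<kappa>)"
  proof -
    have "real x + \<kappa> \<notin> \<int>\<^sub>\<le>\<^sub>0" using assms by (auto dest: nonpos_Ints_nonpos)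
    then show ?thesis using Gamma_plus1[of "real x + \<kappa>"] by (simp add: add_ac)
  qed
  have eq: "fact (Suc x) * Gamma \<kappa> / Gamma (real (Suc x) + \<kappa>)
      = (fact x * Gamma \<kappa> / Gamma (real x + \<kappa>)) * ((real x + 1) / (real x + \<kappa>))"
    unfolding g using assms gp by (simp add: field_simps)
  have pos: "(real x + 1) / (real x + \<kappa>) > 0" using assms by simp
  show ?case
  proof (cases x)
    case 0
    have "Gamma \<kappa> > 0" using assms by (rule Gamma_real_pos)
    then have f0: "fact x * Gamma \<kappa> / Gamma (real x + \<kappa>) = 1" using 0 by simp
    have v: "fact (Suc x) * Gamma \<kappa> / Gamma (real (Suc x) + \<kappa>) = 1 / \<kappa>"
      unfolding eq f0 using 0 by simp
    have "1 / \<kappa> \<le> 2 / min \<kappa> 1"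
    proof (cases "\<kappa> \<le> 1")
      case True then show ?thesis using assms by (simp add: min_def divide_right_mono)
    next
      case False then show ?thesis using assms by (simp add: min_def field_simps)
    qed
    then show ?thesis unfolding v using assms 0 by simp
  next
    case (Suc y)
    have le2: "(real x + 1) / (real x + \<kappa>) \<le> 2" using assms Suc by (simp add: divide_simps)
    have "(fact x * Gamma \<kappa> / Gamma (real x + \<kappa>)) * ((real x + 1) / (real x + \<kappa>)) \<le> (2^x / min \<kappa> 1) * 2"
      using Suc.IH le2 pos by (intro mult_mono) auto
    moreover have "0 < (fact x * Gamma \<kappa> / Gamma (real x + \<kappa>)) * ((real x + 1) / (real x + \<kappa>))"
      using Suc.IH pos by (intro mult_pos_pos) auto
    ultimately show ?thesis unfolding eq by (simp add: mult.commute)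
  qed
qed

lemma geo_le:
  fixes q :: real
  assumes "q \<ge> 1"
  shows "(\<Sum>k\<le>m. q^k) \<le> (real m + 1) * q^m"
proof -
  have "(\<Sum>k\<le>m. q^k) \<le> (\<Sum>k\<le>m. q^m)" using assms by (intro sum_mono power_increasing) auto
  then show ?thesis by (simp add: add.commute)
qed

lemma m_le_pow: "real m + 1 \<le> 2^m"
proof (induction m)
  case (Suc m) then show ?case by simp
qed simp



lemma PhiG_eq:
  assumes "0 < z" "z < 1"
  shows "PhiG \<kappa> \<theta> z = (1 - z) powr \<kappa> * (\<theta> powr (\<kappa> - 1) / Gamma \<kappa> * hr \<kappa> \<theta> z)"
proof -
  have e1: "((1 - z) / z) powr \<kappa> = (1 - z) powr \<kappa> / z powr \<kappa>"
    using assms by (simp add: powr_divide)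
  have e2: "z powr (-\<kappa>) = inverse (z powr \<kappa>)" by (rule powr_minus)
  have "((1 - z) / z) powr \<kappa> = (1 - z) powr \<kappa> * z powr (-\<kappa>)"
    unfolding e1 e2 by (simp add: divide_inverse)
  then show ?thesis unfolding PhiG_def hr_def by (simp add: mult_ac)
qed

lemma phiNB_eq:
  assumes "\<kappa> > 0"
  shows "d * (fact x * Gamma \<kappa> / Gamma (real x + \<kappa>)) * phiNB \<kappa> x z = (1 - z) powr \<kappa> * (d * z^x)"
proof -
  have "Gamma (real x + \<kappa>) > 0" "Gamma \<kappa> > 0" using assms by (auto intro: Gamma_real_pos)
  then show ?thesis unfolding phiNB_def by (simp add: field_simps)
qed

lemma main_kappa:
  fixes r R :: real
  assumes rR: "0 < r" "r < R" "R < 1/2" and k0: "\<kappa> > 0"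
  shows "\<exists>C>0. \<forall>(m::nat) (\<psi>::real \<Rightarrow> real).
         \<psi> \<in> borel_measurable lborel \<longrightarrow> (\<forall>\<theta>\<ge>0. \<bar>\<psi> \<theta>\<bar> \<le> 1) \<longrightarrow>
         (\<exists>c :: nat \<Rightarrow> real.
            (\<forall>z. 0 < z \<longrightarrow> z < 1 \<longrightarrow> \<bar>z - 1/2\<bar> \<le> r \<longrightarrow>
               \<bar>Tpsi \<kappa> \<psi> z - (\<Sum>x\<le>m. c x * phiNB \<kappa> x z)\<bar> \<le> C * (r/R) ^ m) \<and>
            (\<Sum>x\<le>m. \<bar>c x\<bar>) \<le> C * (6/R) ^ m)"
proof -
  define \<delta> where "\<delta> = 1/(1/2+R) - 1"
  have \<delta>0: "\<delta> > 0" unfolding \<delta>_def using rR by (simp add: field_simps)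
  define K0 where "K0 = (1/2 - R) powr (-\<kappa>)"
  have K00: "K0 > 0" unfolding K0_def using rR by simp
  define G where "G = (\<lambda>\<theta>. indicator {0..} \<theta> * \<theta> powr (\<kappa>-1) * exp (-\<delta>*\<theta>))"
  have Gint: "integrable lborel G" unfolding G_def by (rule gamma_integrable_scaled[OF k0 \<delta>0])
  have G0: "G \<theta> \<ge> 0" for \<theta> unfolding G_def by (simp add: indicator_def)
  define J where "J = integral\<^sup>L lborel G"
  have J0: "J \<ge> 0" unfolding J_def using G0 by (simp add: integral_nonneg_AE)
  have gk: "Gamma \<kappa> > 0" using k0 by (rule Gamma_real_pos)
  define Q where "Q = K0 * J / Gamma \<kappa>"
  have Q0: "Q \<ge> 0" unfolding Q_def using K00 J0 gk by simp
  define \<rho> where "\<rho> = r/R"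
  have \<rho>: "0 < \<rho>" "\<rho> < 1" unfolding \<rho>_def using rR by auto
  define \<mu> where "\<mu> = min \<kappa> 1"
  have \<mu>0: "\<mu> > 0" unfolding \<mu>_def using k0 by simp
  define C where "C = Q * (1/(1-\<rho>) + 1/\<mu>) + 1"
  have C0: "C > 0" unfolding C_def using Q0 \<rho> \<mu>0 by (simp add: add_nonneg_pos)
  show ?thesis
  proof (intro exI[of _ C] conjI allI impI C0)
    fix m :: nat and \<psi> :: "real \<Rightarrow> real"
    assume \<psi>m: "\<psi> \<in> borel_measurable lborel" and \<psi>b: "\<forall>\<theta>\<ge>0. \<bar>\<psi> \<theta>\<bar> \<le> 1"
    note [measurable] = \<psi>m
    define w where "w = (\<lambda>\<theta>. indicator {0..} \<theta> * \<psi> \<theta> * \<theta> powr (\<kappa>-1) / Gamma \<kappa>)"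
    have wm[measurable]: "w \<in> borel_measurable lborel" unfolding w_def by measurable
    have wb: "\<bar>w \<theta>\<bar> \<le> indicator {0..} \<theta> * \<theta> powr (\<kappa>-1) / Gamma \<kappa>" for \<theta>
    proof (cases "\<theta> \<ge> 0")
      case True
      then have "\<bar>\<psi> \<theta>\<bar> * (\<theta> powr (\<kappa>-1) / Gamma \<kappa>) \<le> 1 * (\<theta> powr (\<kappa>-1) / Gamma \<kappa>)"
        using \<psi>b gk by (intro mult_right_mono) auto
      then show ?thesis using True gk unfolding w_def by (simp add: abs_mult)
    qed (simp add: w_def)
    have dom: "integrable lborel (\<lambda>\<theta>. w \<theta> * f \<theta>) \<and> \<bar>integral\<^sup>L lborel (\<lambda>\<theta>. w \<theta> * f \<theta>)\<bar> \<le> K0 * c0 / Gamma \<kappa> * J"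
      if fm: "f \<in> borel_measurable lborel" and fb: "\<And>\<theta>. \<theta> \<ge> 0 \<Longrightarrow> \<bar>f \<theta>\<bar> \<le> K0 * c0 * exp (-\<delta>*\<theta>)"
      and c00: "c0 \<ge> 0" for f c0
    proof -
      have pb: "\<bar>w \<theta> * f \<theta>\<bar> \<le> K0 * c0 / Gamma \<kappa> * G \<theta>" for \<theta>
      proof (cases "\<theta> \<ge> 0")
        case True
        have "\<bar>w \<theta> * f \<theta>\<bar> \<le> (indicator {0..} \<theta> * \<theta> powr (\<kappa>-1) / Gamma \<kappa>) * (K0 * c0 * exp (-\<delta>*\<theta>))"
          unfolding abs_mult
        proof (intro mult_mono wb fb True)
          show "0 \<le> indicator {0..} \<theta> * \<theta> powr (\<kappa>-1) / Gamma \<kappa>"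
            using gk by (intro divide_nonneg_pos mult_nonneg_nonneg) auto
        qed auto
        then show ?thesis unfolding G_def by (simp add: field_simps)
      qed (simp add: w_def G_def)
      have int: "integrable lborel (\<lambda>\<theta>. w \<theta> * f \<theta>)"
      proof (rule Bochner_Integration.integrable_bound)
        show "integrable lborel (\<lambda>\<theta>. K0 * c0 / Gamma \<kappa> * G \<theta>)" using Gint by simp
        show "(\<lambda>\<theta>. w \<theta> * f \<theta>) \<in> borel_measurable lborel" using fm by measurable
        show "AE x in lborel. norm (w x * f x) \<le> norm (K0 * c0 / Gamma \<kappa> * G x)"
          using pb G0 K00 c00 gk by (auto intro!: AE_I2 order_trans[OF pb])
      qed
      have "\<bar>integral\<^sup>L lborel (\<lambda>\<theta>. w \<theta> * f \<theta>)\<bar> \<le> integral\<^sup>L lborel (\<lambda>\<theta>. K0 * c0 / Gamma \<kappa> * G \<theta>)"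
        using int Gint pb by (intro integral_abs_bound_integral) auto
      also have "\<dots> = K0 * c0 / Gamma \<kappa> * J" unfolding J_def by simp
      finally show ?thesis using int by simp
    qed
    define A where "A = (\<lambda>k. integral\<^sup>L lborel (\<lambda>\<theta>. w \<theta> * ak \<kappa> k \<theta>))"
    have Ak: "integrable lborel (\<lambda>\<theta>. w \<theta> * ak \<kappa> k \<theta>) \<and> \<bar>A k\<bar> \<le> Q / R^k" for k
    proof -
      have "integrable lborel (\<lambda>\<theta>. w \<theta> * ak \<kappa> k \<theta>) \<and> \<bar>A k\<bar> \<le> K0 * (1/R^k) / Gamma \<kappa> * J"
        unfolding A_def
      proof (rule dom)
        show "(\<lambda>\<theta>. ak \<kappa> k \<theta>) \<in> borel_measurable lborel" by (rule ak_meas)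
        fix \<theta> :: real assume th: "\<theta> \<ge> 0"
        have R0: "0 < R" using rR by simp
        from ak_bound[OF th R0 rR(3) k0, of k]
        show "\<bar>ak \<kappa> k \<theta>\<bar> \<le> K0 * (1/R^k) * exp (-\<delta>*\<theta>)"
          unfolding K0_def \<delta>_def by (simp add: field_simps)
      qed (use rR in simp)
      then show ?thesis unfolding Q_def by (simp add: field_simps)
    qed
    obtain d where d1: "\<And>z. (\<Sum>k\<le>m. A k * (z - 1/2)^k) = (\<Sum>x\<le>m. d x * z^x)"
      and d2: "(\<Sum>x\<le>m. \<bar>d x\<bar>) \<le> (\<Sum>k\<le>m. \<bar>A k\<bar> * (1 + \<bar>1/2\<bar>)^k)"
      using poly_conv[of A "1/2" m] by blast
    define c where "c = (\<lambda>x. d x * (fact x * Gamma \<kappa> / Gamma (real x + \<kappa>)))"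
    show "\<exists>c :: nat \<Rightarrow> real.
            (\<forall>z. 0 < z \<longrightarrow> z < 1 \<longrightarrow> \<bar>z - 1/2\<bar> \<le> r \<longrightarrow>
               \<bar>Tpsi \<kappa> \<psi> z - (\<Sum>x\<le>m. c x * phiNB \<kappa> x z)\<bar> \<le> C * (r/R) ^ m) \<and>
            (\<Sum>x\<le>m. \<bar>c x\<bar>) \<le> C * (6/R) ^ m"
    proof (intro exI[of _ c] conjI allI impI)
      fix z :: real assume z0: "0 < z" and z1: "z < 1" and zr: "\<bar>z - 1/2\<bar> \<le> r"
      note ak_meas[measurable]
      have R0: "0 < R" using rR by simp
      have zR: "\<bar>z - 1/2\<bar> \<le> R" using zr rR by simp
      have Tr: "Tpsi \<kappa> \<psi> z = (1-z) powr \<kappa> * integral\<^sup>L lborel (\<lambda>\<theta>. w \<theta> * hr \<kappa> \<theta> z)"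
      proof -
        have "Tpsi \<kappa> \<psi> z = integral\<^sup>L lborel (\<lambda>\<theta>. (1-z) powr \<kappa> * (w \<theta> * hr \<kappa> \<theta> z))"
          unfolding Tpsi_def set_lebesgue_integral_def
          by (rule Bochner_Integration.integral_cong) (simp_all add: PhiG_eq[OF z0 z1] w_def mult_ac)
        then show ?thesis by simp
      qed
      have hrint: "integrable lborel (\<lambda>\<theta>. w \<theta> * hr \<kappa> \<theta> z)"
      proof -
        have "integrable lborel (\<lambda>\<theta>. w \<theta> * hr \<kappa> \<theta> z) \<and> \<bar>integral\<^sup>L lborel (\<lambda>\<theta>. w \<theta> * hr \<kappa> \<theta> z)\<bar> \<le> K0 * 1 / Gamma \<kappa> * J"
        proof (rule dom)
          show "(\<lambda>\<theta>. hr \<kappa> \<theta> z) \<in> borel_measurable lborel" unfolding hr_def by measurable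
          fix \<theta> :: real assume th: "\<theta> \<ge> 0"
          from hr_bound[OF th R0 rR(3) k0 zR z0]
          show "\<bar>hr \<kappa> \<theta> z\<bar> \<le> K0 * 1 * exp (-\<delta>*\<theta>)" unfolding K0_def \<delta>_def by simp
        qed simp
        then show ?thesis by simp
      qed
      define P where "P = (\<lambda>k \<theta>. w \<theta> * ak \<kappa> k \<theta> * (z - 1/2)^k)"
      have Pint: "integrable lborel (P k)" for k
        unfolding P_def using Ak[of k] by (intro integrable_mult_left) simp
      have Sint: "integrable lborel (\<lambda>\<theta>. \<Sum>k\<le>m. P k \<theta>)" by (rule Bochner_Integration.integrable_sum) (rule Pint)
      have Sr: "(\<Sum>x\<le>m. c x * phiNB \<kappa> x z) = (1-z) powr \<kappa> * integral\<^sup>L lborel (\<lambda>\<theta>. \<Sum>k\<le>m. P k \<theta>)"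
      proof -
        have "(\<Sum>x\<le>m. c x * phiNB \<kappa> x z) = (\<Sum>x\<le>m. (1-z) powr \<kappa> * (d x * z^x))"
          unfolding c_def using phiNB_eq[OF k0] by simp
        also have "\<dots> = (1-z) powr \<kappa> * (\<Sum>k\<le>m. A k * (z - 1/2)^k)"
          by (simp add: sum_distrib_left d1)
        also have "(\<Sum>k\<le>m. A k * (z - 1/2)^k) = (\<Sum>k\<le>m. integral\<^sup>L lborel (P k))"
          unfolding P_def A_def by simp
        also have "\<dots> = integral\<^sup>L lborel (\<lambda>\<theta>. \<Sum>k\<le>m. P k \<theta>)"
          by (rule Bochner_Integration.integral_sum[symmetric]) (rule Pint)
        finally show ?thesis .
      qed
      define F where "F = (\<lambda>\<theta>. hr \<kappa> \<theta> z - (\<Sum>k\<le>m. ak \<kappa> k \<theta> * (z - 1/2)^k))"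
      have Fw: "w \<theta> * hr \<kappa> \<theta> z - (\<Sum>k\<le>m. P k \<theta>) = w \<theta> * F \<theta>" for \<theta>
        unfolding F_def P_def by (simp add: right_diff_distrib sum_distrib_left mult_ac)
      have Fb: "\<bar>integral\<^sup>L lborel (\<lambda>\<theta>. w \<theta> * F \<theta>)\<bar> \<le> K0 * (\<rho>^(m+1) / (1 - \<rho>)) / Gamma \<kappa> * J"
      proof -
        have "integrable lborel (\<lambda>\<theta>. w \<theta> * F \<theta>) \<and> \<bar>integral\<^sup>L lborel (\<lambda>\<theta>. w \<theta> * F \<theta>)\<bar> \<le> K0 * (\<rho>^(m+1) / (1 - \<rho>)) / Gamma \<kappa> * J"
        proof (rule dom)
          show "F \<in> borel_measurable lborel" unfolding F_def hr_def by measurable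
          fix \<theta> :: real assume th: "\<theta> \<ge> 0"
          from hr_taylor[OF th rR k0 zr z0, of m]
          show "\<bar>F \<theta>\<bar> \<le> K0 * (\<rho>^(m+1) / (1 - \<rho>)) * exp (-\<delta>*\<theta>)"
            unfolding F_def K0_def \<delta>_def \<rho>_def by (simp add: field_simps)
        qed (use \<rho> in simp)
        then show ?thesis by simp
      qed
      have "Tpsi \<kappa> \<psi> z - (\<Sum>x\<le>m. c x * phiNB \<kappa> x z)
          = (1-z) powr \<kappa> * (integral\<^sup>L lborel (\<lambda>\<theta>. w \<theta> * hr \<kappa> \<theta> z) - integral\<^sup>L lborel (\<lambda>\<theta>. \<Sum>k\<le>m. P k \<theta>))"
        unfolding Tr Sr by (simp add: right_diff_distrib)
      also have "integral\<^sup>L lborel (\<lambda>\<theta>. w \<theta> * hr \<kappa> \<theta> z) - integral\<^sup>L lborel (\<lambda>\<theta>. \<Sum>k\<le>m. P k \<theta>)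
          = integral\<^sup>L lborel (\<lambda>\<theta>. w \<theta> * F \<theta>)"
        unfolding Fw[symmetric] by (rule Bochner_Integration.integral_diff[symmetric, OF hrint Sint])
      finally have eq: "Tpsi \<kappa> \<psi> z - (\<Sum>x\<le>m. c x * phiNB \<kappa> x z) = (1-z) powr \<kappa> * integral\<^sup>L lborel (\<lambda>\<theta>. w \<theta> * F \<theta>)" .
      have p1: "(1-z) powr \<kappa> \<le> 1" using z0 z1 k0 by (intro powr_le1) auto
      have p0: "(1-z) powr \<kappa> \<ge> 0" by simp
      have "\<bar>Tpsi \<kappa> \<psi> z - (\<Sum>x\<le>m. c x * phiNB \<kappa> x z)\<bar> \<le> 1 * (K0 * (\<rho>^(m+1) / (1 - \<rho>)) / Gamma \<kappa> * J)"
        unfolding eq abs_mult using p0 p1 Fb by (intro mult_mono) auto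
      also have "\<dots> = Q / (1 - \<rho>) * \<rho> * \<rho>^m" unfolding Q_def by (simp add: field_simps)
      also have "\<dots> \<le> Q / (1 - \<rho>) * 1 * \<rho>^m"
        using Q0 \<rho> by (intro mult_right_mono mult_left_mono) auto
      also have "\<dots> \<le> C * \<rho>^m"
      proof (intro mult_right_mono)
        show "Q / (1 - \<rho>) * 1 \<le> C" unfolding C_def using Q0 \<mu>0 by (simp add: distrib_left)
      qed (use \<rho> in simp)
      finally show "\<bar>Tpsi \<kappa> \<psi> z - (\<Sum>x\<le>m. c x * phiNB \<kappa> x z)\<bar> \<le> C * (r/R) ^ m"
        unfolding \<rho>_def .
    next
      have R0: "0 < R" using rR by simp
      have "(\<Sum>x\<le>m. \<bar>c x\<bar>) \<le> (\<Sum>x\<le>m. \<bar>d x\<bar> * (2^m / \<mu>))"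
      proof (rule sum_mono)
        fix x assume "x \<in> {..m}"
        then have xm: "x \<le> m" by simp
        have gr: "0 < fact x * Gamma \<kappa> / Gamma (real x + \<kappa>)" "fact x * Gamma \<kappa> / Gamma (real x + \<kappa>) \<le> 2^x / \<mu>"
          using gamma_ratio[OF k0, of x] unfolding \<mu>_def by auto
        have "(2::real)^x / \<mu> \<le> 2^m / \<mu>" using xm \<mu>0 by (intro divide_right_mono power_increasing) auto
        then have "\<bar>fact x * Gamma \<kappa> / Gamma (real x + \<kappa>)\<bar> \<le> 2^m / \<mu>" using gr by simp
        then show "\<bar>c x\<bar> \<le> \<bar>d x\<bar> * (2^m / \<mu>)" unfolding c_def abs_mult
          by (intro mult_left_mono) auto
      qed
      also have "\<dots> = (2^m / \<mu>) * (\<Sum>x\<le>m. \<bar>d x\<bar>)" by (simp only: sum_distrib_right mult.commute)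
      also have "\<dots> \<le> (2^m / \<mu>) * (\<Sum>k\<le>m. Q * (3/(2*R))^k)"
      proof (intro mult_left_mono order_trans[OF d2] sum_mono)
        fix k assume "k \<in> {..m}"
        have e32: "(1 + \<bar>1/2\<bar>::real) = 3/2" by simp
        have "\<bar>A k\<bar> * (1 + \<bar>1/2\<bar>)^k \<le> Q / R^k * (3/2)^k"
          unfolding e32 using Ak[of k] by (intro mult_right_mono) auto
        also have "\<dots> = Q * (3/(2*R))^k" by (simp add: power_divide power_mult_distrib)
        finally show "\<bar>A k\<bar> * (1 + \<bar>1/2::real\<bar>)^k \<le> Q * (3/(2*R))^k" .
      qed (use \<mu>0 in simp)
      also have "\<dots> = (2^m / \<mu>) * Q * (\<Sum>k\<le>m. (3/(2*R))^k)" by (simp add: sum_distrib_left mult_ac)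
      also have "\<dots> \<le> (2^m / \<mu>) * Q * ((real m + 1) * (3/(2*R))^m)"
        using \<mu>0 Q0 R0 rR by (intro mult_left_mono geo_le) (auto simp: field_simps)
      also have "\<dots> \<le> (2^m / \<mu>) * Q * (2^m * (3/(2*R))^m)"
        using \<mu>0 Q0 R0 m_le_pow[of m] by (intro mult_left_mono mult_right_mono) auto
      also have "\<dots> = Q / \<mu> * (2^m * 2^m * (3/(2*R))^m)" by simp
      also have "\<dots> = Q / \<mu> * (6/R)^m"
      proof -
        have "(2::real)^m * 2^m * (3/(2*R))^m = (2 * 2 * (3/(2*R)))^m" by (simp only: power_mult_distrib)
        also have "(2 * 2 * (3/(2*R))) = 6/R" by simp
        finally show ?thesis by simp
      qed
      also have "\<dots> \<le> C * (6/R)^m"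
      proof (intro mult_right_mono)
        show "Q / \<mu> \<le> C" unfolding C_def using Q0 \<mu>0 \<rho> by (simp add: distrib_left)
      qed (use R0 in simp)
      finally show "(\<Sum>x\<le>m. \<bar>c x\<bar>) \<le> C * (6/R) ^ m" .
    qed
  qed
qed



theorem lemmaD3:
  fixes L U :: real
  assumes "0 < L" "L < U"
  shows "\<exists>\<rho> B. 0 < \<rho> \<and> \<rho> < 1 \<and> 1 < B \<and>
    (\<forall>\<kappa>::real. \<kappa> > 0 \<longrightarrow>
      (\<exists>C>0. \<forall>(m::nat) (\<psi>::real \<Rightarrow> real).
         m \<ge> 2 \<longrightarrow> \<psi> \<in> borel_measurable lborel \<longrightarrow> (\<forall>\<theta>\<ge>0. \<bar>\<psi> \<theta>\<bar> \<le> 1) \<longrightarrow>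
         (\<exists>c :: nat \<Rightarrow> real.
            (\<forall>z\<in>{1/(1+U)..1/(1+L)}.
               \<bar>Tpsi \<kappa> \<psi> z - (\<Sum>x\<le>m. c x * phiNB \<kappa> x z)\<bar> \<le> C * \<rho> ^ m) \<and>
            (\<Sum>x\<le>m. \<bar>c x\<bar>) \<le> C * (real m + 1) powr (max (1 - \<kappa>) 0) * B ^ m)))"
proof -
  define a where "a = 1/(1+U)"
  define b where "b = 1/(1+L)"
  have a0: "0 < a" unfolding a_def using assms by simp
  have b1: "b < 1" unfolding b_def using assms by simp
  define r where "r = max (max (1/2 - a) (b - 1/2)) (1/4)"
  have r0: "0 < r" unfolding r_def by simp
  have rh: "r < 1/2" unfolding r_def using a0 b1 by (simp add: max_def)
  define R where "R = (r + 1/2)/2"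
  have rR: "r < R" "R < 1/2" unfolding R_def using rh by simp_all
  have R0: "0 < R" using r0 rR by simp
  have zI: "0 < z \<and> z < 1 \<and> \<bar>z - 1/2\<bar> \<le> r" if "z \<in> {a..b}" for z
    using that a0 b1 unfolding r_def by (auto simp: abs_le_iff)
  have p1: "0 < r/R" using r0 R0 by simp
  have p2: "r/R < 1" using rR R0 by simp
  have p3: "1 < 6/R" using rR R0 by (simp add: field_simps)
  have main: "\<forall>\<kappa>::real. \<kappa> > 0 \<longrightarrow>
      (\<exists>C>0. \<forall>(m::nat) (\<psi>::real \<Rightarrow> real).
         m \<ge> 2 \<longrightarrow> \<psi> \<in> borel_measurable lborel \<longrightarrow> (\<forall>\<theta>\<ge>0. \<bar>\<psi> \<theta>\<bar> \<le> 1) \<longrightarrow>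
         (\<exists>c :: nat \<Rightarrow> real.
            (\<forall>z\<in>{1/(1+U)..1/(1+L)}.
               \<bar>Tpsi \<kappa> \<psi> z - (\<Sum>x\<le>m. c x * phiNB \<kappa> x z)\<bar> \<le> C * (r/R) ^ m) \<and>
            (\<Sum>x\<le>m. \<bar>c x\<bar>) \<le> C * (real m + 1) powr (max (1 - \<kappa>) 0) * (6/R) ^ m))"
  proof (intro allI impI)
    fix \<kappa> :: real assume k0: "0 < \<kappa>"
    obtain C where C0: "C > 0" and HC: "\<And>m \<psi>. \<psi> \<in> borel_measurable lborel \<Longrightarrow> (\<forall>\<theta>\<ge>0. \<bar>\<psi> \<theta>\<bar> \<le> 1) \<Longrightarrow>
         (\<exists>c :: nat \<Rightarrow> real.
            (\<forall>z. 0 < z \<longrightarrow> z < 1 \<longrightarrow> \<bar>z - 1/2\<bar> \<le> r \<longrightarrow>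
               \<bar>Tpsi \<kappa> \<psi> z - (\<Sum>x\<le>m. c x * phiNB \<kappa> x z)\<bar> \<le> C * (r/R) ^ m) \<and>
            (\<Sum>x\<le>m. \<bar>c x\<bar>) \<le> C * (6/R) ^ m)"
      using main_kappa[OF r0 rR k0] by blast
    show "\<exists>C>0. \<forall>(m::nat) (\<psi>::real \<Rightarrow> real).
         m \<ge> 2 \<longrightarrow> \<psi> \<in> borel_measurable lborel \<longrightarrow> (\<forall>\<theta>\<ge>0. \<bar>\<psi> \<theta>\<bar> \<le> 1) \<longrightarrow>
         (\<exists>c :: nat \<Rightarrow> real.
            (\<forall>z\<in>{1/(1+U)..1/(1+L)}.
               \<bar>Tpsi \<kappa> \<psi> z - (\<Sum>x\<le>m. c x * phiNB \<kappa> x z)\<bar> \<le> C * (r/R) ^ m) \<and>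
            (\<Sum>x\<le>m. \<bar>c x\<bar>) \<le> C * (real m + 1) powr (max (1 - \<kappa>) 0) * (6/R) ^ m)"
    proof (intro exI[of _ C] conjI allI impI C0)
      fix m :: nat and \<psi> :: "real \<Rightarrow> real"
      assume "\<psi> \<in> borel_measurable lborel" "\<forall>\<theta>\<ge>0. \<bar>\<psi> \<theta>\<bar> \<le> 1"
      from HC[OF this] obtain c where c1: "\<forall>z. 0 < z \<longrightarrow> z < 1 \<longrightarrow> \<bar>z - 1/2\<bar> \<le> r \<longrightarrow>
               \<bar>Tpsi \<kappa> \<psi> z - (\<Sum>x\<le>m. c x * phiNB \<kappa> x z)\<bar> \<le> C * (r/R) ^ m"
        and c2: "(\<Sum>x\<le>m. \<bar>c x\<bar>) \<le> C * (6/R) ^ m" by blast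
      show "\<exists>c :: nat \<Rightarrow> real.
            (\<forall>z\<in>{1/(1+U)..1/(1+L)}.
               \<bar>Tpsi \<kappa> \<psi> z - (\<Sum>x\<le>m. c x * phiNB \<kappa> x z)\<bar> \<le> C * (r/R) ^ m) \<and>
            (\<Sum>x\<le>m. \<bar>c x\<bar>) \<le> C * (real m + 1) powr (max (1 - \<kappa>) 0) * (6/R) ^ m"
      proof (intro exI[of _ c] conjI ballI)
        fix z assume "z \<in> {1/(1+U)..1/(1+L)}"
        then have "z \<in> {a..b}" unfolding a_def b_def .
        then show "\<bar>Tpsi \<kappa> \<psi> z - (\<Sum>x\<le>m. c x * phiNB \<kappa> x z)\<bar> \<le> C * (r/R) ^ m"
          using c1 zI by blast
      next
        have "1 \<le> (real m + 1) powr (max (1 - \<kappa>) 0)" by (intro ge_one_powr_ge_zero) auto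
        then have "C * (6/R) ^ m \<le> C * (real m + 1) powr (max (1 - \<kappa>) 0) * (6/R) ^ m"
          using C0 R0 by (simp add: mult_left_mono mult_right_mono mult.assoc[symmetric])
        then show "(\<Sum>x\<le>m. \<bar>c x\<bar>) \<le> C * (real m + 1) powr (max (1 - \<kappa>) 0) * (6/R) ^ m"
          using c2 by linarith
      qed
    qed
  qed
  show ?thesis using p1 p2 p3 main by blast
qed

end
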